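(* Let $S' \subset \mathbb{R}^j$ be a subset of a Euclidean space. Then for all positive integers $k$ and all $m\geq 2$, we have \[\mathrm{Tv}(S' \times \mathbb{R}^k, m) \leq \mathrm{Tv}(S' , \mathrm{Tv}(\mathbb{R}^k,m)).\]
   Context: For $S\subseteq\mathbb{R}^d$ and an integer $m\geq 2$, the Tverberg number $\mathrm{Tv}(S,m)$ is the smallest positive integer $n$ such that any multiset of $n$ points in $S$ admits a partition into $m$ submultisets $A_1,\dots,A_m$ with $\left(\bigcap_{i=1}^m\mathrm{conv}(A_i)\right)\cap S\neq\varnothing$ (and $\mathrm{Tv}(S,m)=\infty$ if no such number exists). *)

theory Defs
  imports "HOL-Analysis.Analysis" "HOL-Library.Multiset" "HOL-Library.Extended_Nat"
begin

definition tverberg_partitionable :: "'a::real_vector set \<Rightarrow> nat \<Rightarrow> 'a multiset \<Rightarrow> bool" where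
  "tverberg_partitionable S m M \<longleftrightarrow>
     (\<exists>A :: nat \<Rightarrow> 'a multiset. (\<Sum>i<m. A i) = M \<and>
        (\<Inter>i<m. convex hull (set_mset (A i))) \<inter> S \<noteq> {})"

definition tverberg_prop :: "'a::real_vector set \<Rightarrow> nat \<Rightarrow> nat \<Rightarrow> bool" where
  "tverberg_prop S m n \<longleftrightarrow>
     (\<forall>M. size M = n \<and> set_mset M \<subseteq> S \<longrightarrow> tverberg_partitionable S m M)"

definition Tv :: "'a::real_vector set \<Rightarrow> nat \<Rightarrow> enat" where
  "Tv S m = (if \<exists>n. 0 < n \<and> tverberg_prop S m n
             then enat (LEAST n. 0 < n \<and> tverberg_prop S m n) else \<infinity>)"

end

theory Submission
  imports Defs
begin

lemma lift_partition:
  fixes m :: nat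
  shows "image_mset f N = (\<Sum>i<m. A i) \<Longrightarrow>
   \<exists>B. (\<Sum>i<m. B i) = N \<and> (\<forall>i<m. image_mset f (B i) = A i)"
proof (induction m arbitrary: N)
  case 0
  then show ?case by auto
next
  case (Suc m)
  from Suc.prems have "image_mset f N = (\<Sum>i<m. A i) + A m" by simp
  then obtain N1 N2 where N: "N = N1 + N2" "image_mset f N1 = (\<Sum>i<m. A i)" "A m = image_mset f N2"
    using image_mset_eq_plusD[OF \<open>image_mset f N = (\<Sum>i<m. A i) + A m\<close>] by metis
  from Suc.IH[OF N(2)] obtain B where B: "(\<Sum>i<m. B i) = N1" "\<forall>i<m. image_mset f (B i) = A i"
    by blast
  define B' where "B' = B(m := N2)"
  have "(\<Sum>i<m. B' i) = (\<Sum>i<m. B i)" unfolding B'_def by (rule sum.cong) auto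
  then have "(\<Sum>i<Suc m. B' i) = N" using B N by (simp add: B'_def)
  moreover have "\<forall>i<Suc m. image_mset f (B' i) = A i"
    using B N by (auto simp: B'_def less_Suc_eq)
  ultimately show ?case by blast
qed

lemma Tv_enatD:
  assumes "Tv S m = enat n"
  shows "0 < n" "tverberg_prop S m n"
proof -
  have ex: "\<exists>n. 0 < n \<and> tverberg_prop S m n"
    using assms unfolding Tv_def by (auto split: if_splits)
  then have "n = (LEAST n. 0 < n \<and> tverberg_prop S m n)"
    using assms unfolding Tv_def by auto
  then show "0 < n" "tverberg_prop S m n"
    using LeastI_ex[OF ex] by auto
qed

lemma Tv_le:
  assumes "0 < n" "tverberg_prop S m n"
  shows "Tv S m \<le> enat n"
proof -
  have ex: "\<exists>n. 0 < n \<and> tverberg_prop S m n" using assms by blast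
  then show ?thesis unfolding Tv_def using Least_le[of "\<lambda>n. 0 < n \<and> tverberg_prop S m n" n] assms
    by auto
qed

theorem theorem3:
  fixes S' :: "(real ^ 'j) set"
  assumes "m \<ge> 2"
  shows "Tv (S' \<times> (UNIV :: (real ^ 'k) set)) m \<le>
           (case Tv (UNIV :: (real ^ 'k) set) m of enat t \<Rightarrow> Tv S' t | \<infinity> \<Rightarrow> \<infinity>)"
proof (cases "Tv (UNIV :: (real ^ 'k) set) m")
  case infinity
  then show ?thesis by simp
next
  case (enat t)
  note tprop = Tv_enatD[OF enat]
  show ?thesis
  proof (cases "Tv S' t")
    case infinity
    then show ?thesis using enat by simp
  next
    case (enat n)
    note nprop = Tv_enatD[OF enat]
    have "tverberg_prop (S' \<times> (UNIV :: (real ^ 'k) set)) m n"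
      unfolding tverberg_prop_def
    proof (intro allI impI)
      fix M :: "((real ^ 'j) \<times> (real ^ 'k)) multiset"
      assume M: "size M = n \<and> set_mset M \<subseteq> S' \<times> UNIV"
      have "size (image_mset fst M) = n \<and> set_mset (image_mset fst M) \<subseteq> S'"
        using M by auto
      then have "tverberg_partitionable S' t (image_mset fst M)"
        using nprop(2) unfolding tverberg_prop_def by blast
      then obtain Bp where Bp: "(\<Sum>i<t. Bp i) = image_mset fst M"
        "(\<Inter>i<t. convex hull (set_mset (Bp i))) \<inter> S' \<noteq> {}"
        unfolding tverberg_partitionable_def by blast
      then obtain p where p: "p \<in> S'" "\<And>i. i < t \<Longrightarrow> p \<in> convex hull (set_mset (Bp i))"
        by blast
      obtain Mi where Mi: "(\<Sum>i<t. Mi i) = M" "\<forall>i<t. image_mset fst (Mi i) = Bp i"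
        using lift_partition[OF Bp(1)[symmetric]] by blast
      have "\<exists>z. z \<in> convex hull (set_mset (Mi i)) \<and> fst z = p" if "i < t" for i
      proof -
        have "p \<in> convex hull (fst ` set_mset (Mi i))" using p(2)[OF that] Mi(2) that by (metis set_image_mset)
        then have "p \<in> fst ` (convex hull (set_mset (Mi i)))"
          using convex_hull_linear_image[OF linear_fst] by metis
        then show ?thesis by auto
      qed
      then obtain z where z: "\<And>i. i < t \<Longrightarrow> z i \<in> convex hull (set_mset (Mi i)) \<and> fst (z i) = p"
        by metis
      define Y where "Y = image_mset (\<lambda>i. snd (z i)) (mset_set {..<t})"
      have "size Y = t \<and> set_mset Y \<subseteq> UNIV" unfolding Y_def by simp
      then have "tverberg_partitionable (UNIV :: (real ^ 'k) set) m Y"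
        using tprop(2) unfolding tverberg_prop_def by blast
      then obtain C where C: "(\<Sum>j<m. C j) = Y"
        "(\<Inter>j<m. convex hull (set_mset (C j))) \<inter> UNIV \<noteq> {}"
        unfolding tverberg_partitionable_def by blast
      then obtain q where q: "\<And>j. j < m \<Longrightarrow> q \<in> convex hull (set_mset (C j))"
        by blast
      obtain N where N: "(\<Sum>j<m. N j) = mset_set {..<t}"
        "\<forall>j<m. image_mset (\<lambda>i. snd (z i)) (N j) = C j"
        using lift_partition[OF C(1)[unfolded Y_def, symmetric]] by blast
      define A where "A j = sum_mset (image_mset Mi (N j))" for j
      have "(\<Sum>j<m. A j) = sum_mset (image_mset Mi (\<Sum>j<m. N j))"
        unfolding A_def by (induction m) auto
      also have "\<dots> = (\<Sum>i<t. Mi i)" using N(1) by (simp add: sum_unfold_sum_mset)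
      finally have sumA: "(\<Sum>j<m. A j) = M" using Mi(1) by simp
      have "(p, q) \<in> convex hull (set_mset (A j))" if j: "j < m" for j
      proof -
        have Nsub: "N j \<subseteq># mset_set {..<t}"
          using N(1) j by (metis sum.remove finite_lessThan lessThan_iff mset_subset_eq_add_left)
        then have Nt: "\<And>i. i \<in># N j \<Longrightarrow> i < t"
          by (metis finite_lessThan finite_set_mset_mset_set lessThan_iff mset_subset_eqD)
        define Z where "Z = z ` set_mset (N j)"
        have ZA: "Z \<subseteq> convex hull (set_mset (A j))"
        proof
          fix x assume "x \<in> Z"
          then obtain i where i: "i \<in># N j" "x = z i" unfolding Z_def by auto
          have "set_mset (Mi i) \<subseteq> set_mset (A j)"
            unfolding A_def using i(1) by (metis mset_subset_eq_add_left multi_member_split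
                image_mset_add_mset sum_mset.insert set_mset_mono)
          then have "convex hull (set_mset (Mi i)) \<subseteq> convex hull (set_mset (A j))"
            by (rule hull_mono)
          then show "x \<in> convex hull (set_mset (A j))" using z[OF Nt[OF i(1)]] i by auto
        qed
        have "set_mset (C j) = snd ` Z" using N(2) j unfolding Z_def
          by (metis set_image_mset image_image)
        then have "q \<in> convex hull (snd ` Z)" using q[OF j] by simp
        then have "q \<in> snd ` (convex hull Z)"
          using convex_hull_linear_image[OF linear_snd] by metis
        then obtain w where w: "w \<in> convex hull Z" "snd w = q" by auto
        have cvx: "convex {w :: (real ^ 'j) \<times> (real ^ 'k). fst w = p}"
          unfolding convex_def by (auto simp: algebra_simps scaleR_add_left[symmetric])
        have "Z \<subseteq> {w. fst w = p}" unfolding Z_def using z Nt by auto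
        then have "convex hull Z \<subseteq> {w. fst w = p}" using cvx by (rule hull_minimal)
        then have "w = (p, q)" using w by (metis (mono_tags) mem_Collect_eq prod.collapse subsetD)
        moreover have "convex hull Z \<subseteq> convex hull (set_mset (A j))"
          using ZA by (metis convex_convex_hull hull_minimal)
        ultimately show ?thesis using w by auto
      qed
      then have "(p, q) \<in> (\<Inter>j<m. convex hull (set_mset (A j))) \<inter> (S' \<times> UNIV)"
        using p(1) by auto
      then show "tverberg_partitionable (S' \<times> UNIV) m M"
        unfolding tverberg_partitionable_def using sumA by blast
    qed
    then have "Tv (S' \<times> (UNIV :: (real ^ 'k) set)) m \<le> enat n" using Tv_le nprop(1) by blast
    then show ?thesis using \<open>Tv UNIV m = enat t\<close> enat by simp
  qed
qed

end
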